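(* Let $\nu\ge 1$ be an integer and let $\widetilde{L}_\nu(t)=\left.\left(\frac{d}{du}\right)^{\nu}(u^2-1)^{\nu}\right|_{u=2t-1}$, a polynomial in $t$ of degree $\nu$. Among all $(2\nu)$-indistinguishable finite bias distributions, there is a unique one with the minimal number of possible output values, namely the distribution $\mathcal{P}_{2\nu}$ whose possible outputs are the zeroes $p$ of $\widetilde{L}_\nu$, each output $p$ being taken with probability $\frac{C}{(p(1-p))^{3/2}\,\widetilde{L}_\nu{}'(p)^2}$, where $C>0$ is the normalizing constant making the probabilities sum to $1$. This distribution has exactly $\nu$ possible outputs.
   Context: A finite bias distribution is a probability distribution $\mathcal{P}$ supported on a finite subset of the open interval $(0,1)$ that is symmetric: for every $a$, $\mathcal{P}$ outputs $a$ and $1-a$ with the same probability. $E_p$ denotes expectation over $p$ drawn from $\mathcal{P}$. For $0<p<1$ put $\sigma(p)=\sqrt{(1-p)/p}$, and for integers $\ell\ge 1$, $0\le x\le\ell$ put $f_{\ell,x}(p)=p^x(1-p)^{\ell-x}\bigl(x\sigma(p)-(\ell-x)\sigma(1-p)\bigr)$ and $R_{\ell,x}=\max\{0,E_p[f_{\ell,x}(p)]\}$. For a positive integer $c$, $\mathcal{P}$ is called $c$-indistinguishable if $\sum_{x=1}^{\ell-1}\binom{\ell}{x}R_{\ell,x}=0$ for all $2\le\ell\le c$. "Number of possible outputs" means the size of the support of the distribution. *)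

theory Defs
  imports "HOL-Probability.Probability" "HOL-Computational_Algebra.Polynomial"
begin

definition finite_bias_distribution :: "real pmf \<Rightarrow> bool" where
  "finite_bias_distribution P \<longleftrightarrow>
     finite (set_pmf P) \<and> set_pmf P \<subseteq> {0<..<1} \<and> (\<forall>a. pmf P a = pmf P (1 - a))"

definition sigma_b :: "real \<Rightarrow> real" where
  "sigma_b p = sqrt ((1 - p) / p)"

definition f_bias :: "nat \<Rightarrow> nat \<Rightarrow> real \<Rightarrow> real" where
  "f_bias l x p = p ^ x * (1 - p) ^ (l - x) *
      (real x * sigma_b p - real (l - x) * sigma_b (1 - p))"

definition R_bias :: "real pmf \<Rightarrow> nat \<Rightarrow> nat \<Rightarrow> real" where
  "R_bias P l x = max 0 (measure_pmf.expectation P (f_bias l x))"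

definition indistinguishable :: "nat \<Rightarrow> real pmf \<Rightarrow> bool" where
  "indistinguishable c P \<longleftrightarrow>
     (\<forall>l. 2 \<le> l \<and> l \<le> c \<longrightarrow>
        (\<Sum>x = 1..l - 1. real (l choose x) * R_bias P l x) = 0)"

definition shifted_legendre :: "nat \<Rightarrow> real poly" where
  "shifted_legendre \<nu> = pcompose ((pderiv ^^ \<nu>) ([:-1, 0, 1:] ^ \<nu>)) [:-1, 2:]"

definition minimal_indist :: "nat \<Rightarrow> real pmf \<Rightarrow> bool" where
  "minimal_indist c P \<longleftrightarrow> finite_bias_distribution P \<and> indistinguishable c P \<and>
     (\<forall>Q. finite_bias_distribution Q \<and> indistinguishable c Q \<longrightarrow>
          card (set_pmf P) \<le> card (set_pmf Q))"

end

theory Submission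
  imports Defs
begin

definition Ip :: "real poly \<Rightarrow> real" where
  "Ip p = integral {0..1} (poly p)"

lemma poly_integrable01[simp]: "poly p integrable_on {0..1::real}"
  by (rule integrable_continuous_real) (auto intro!: continuous_intros)

lemma Ip_pderiv: "Ip (pderiv p) = poly p 1 - poly p 0"
proof -
  have "(poly (pderiv p) has_integral (poly p 1 - poly p 0)) {0..1}"
    by (rule fundamental_theorem_of_calculus)
       (auto simp: has_real_derivative_iff_has_vector_derivative[symmetric] intro!: poly_DERIV has_field_derivative_at_within)
  then show ?thesis unfolding Ip_def by (rule integral_unique)
qed

lemma Ip_add: "Ip (p + q) = Ip p + Ip q"
proof -
  have "poly (p + q) = (\<lambda>x. poly p x + poly q x)" by (rule ext) simp
  then show ?thesis unfolding Ip_def by (simp add: integral_add)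
qed

lemma Ip_smult: "Ip (smult c p) = c * Ip p"
proof -
  have "poly (smult c p) = (\<lambda>x. c * poly p x)" by (rule ext) simp
  then show ?thesis unfolding Ip_def by simp
qed

lemma Ip_minus: "Ip (- p) = - Ip p"
proof -
  have "poly (- p) = (\<lambda>x. - poly p x)" by (rule ext) simp
  then show ?thesis unfolding Ip_def by (simp add: integral_neg)
qed

lemma Ip_diff: "Ip (p - q) = Ip p - Ip q"
proof -
  have "poly (p - q) = (\<lambda>x. poly p x - poly q x)" by (rule ext) simp
  then show ?thesis unfolding Ip_def by (simp add: integral_diff)
qed

lemma Ip_0[simp]: "Ip 0 = 0"
proof -
  have "poly 0 = (\<lambda>x::real. 0)" by (rule ext) simp
  then show ?thesis unfolding Ip_def by simp
qed

lemma Ip_sum: "Ip (sum f A) = (\<Sum>a\<in>A. Ip (f a))"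
  by (induction A rule: infinite_finite_induct) (auto simp: Ip_add)

lemma Ip_monom: "Ip (monom c k) = c / (real k + 1)"
proof -
  have e: "(1 + real k) * c / (real k + 1) = c" by (simp add: add.commute)
  have "monom c k = pderiv (monom (c / (real k + 1)) (Suc k))"
    by (simp add: pderiv_monom e)
  then show ?thesis by (simp add: Ip_pderiv poly_monom)
qed

lemma Ip_const: "Ip [:c:] = c"
  using Ip_monom[of c 0] by (simp add: monom_0)

lemma Ip_pos:
  assumes "p \<noteq> 0" shows "Ip (p * p) > 0"
proof -
  have ge: "Ip (p * p) \<ge> 0" unfolding Ip_def
    by (rule integral_nonneg) auto
  have "Ip (p * p) \<noteq> 0"
  proof
    assume "Ip (p * p) = 0"
    then have "integral (cbox 0 1) (poly (p * p)) = 0" by (simp add: Ip_def)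
    then have "\<forall>x\<in>cbox 0 (1::real). poly (p * p) x = 0"
      by (subst (asm) integral_cbox_eq_0_iff) (auto intro!: continuous_intros)
    then have "{0..1::real} \<subseteq> {x. poly p x = 0}" by auto
    moreover have "finite {x. poly p x = 0}" using assms by (rule poly_roots_finite)
    ultimately have "finite {0..1::real}" by (rule finite_subset)
    then show False by (simp add: infinite_Icc)
  qed
  with ge show ?thesis by linarith
qed

lemma Ip_coeffs: "Ip p = (\<Sum>k\<le>degree p. coeff p k / (real k + 1))"
proof -
  have "p = (\<Sum>k\<le>degree p. monom (coeff p k) k)" by (rule poly_as_sum_of_monoms[symmetric])
  then have "Ip p = Ip (\<Sum>k\<le>degree p. monom (coeff p k) k)" by simp
  also have "\<dots> = (\<Sum>k\<le>degree p. coeff p k / (real k + 1))" by (simp add: Ip_sum Ip_monom)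
  finally show ?thesis .
qed

definition Vp :: "nat \<Rightarrow> real poly" where "Vp n = [:0, -1, 1:] ^ n"
definition Wp :: "nat \<Rightarrow> real poly" where "Wp n = (pderiv ^^ n) (Vp n)"

lemma pderiv_funpow_smult: "(pderiv ^^ k) (smult c p) = smult c ((pderiv ^^ k) p)"
  by (induction k) (auto simp: pderiv_smult)

lemma pderiv_funpow_0: "(pderiv ^^ k) 0 = (0 :: 'a::{comm_semiring_1,semiring_no_zero_divisors} poly)"
  by (induction k) (auto simp: pderiv_0)

lemma pderiv_funpow_lin:
  "(pderiv ^^ k) (pcompose p [:a, b:]) = smult (b ^ k) (pcompose ((pderiv ^^ k) p) [:a, b::real:])"
proof (induction k)
  case 0 then show ?case by simp
next
  case (Suc k)
  have "(pderiv ^^ Suc k) (pcompose p [:a, b:]) = pderiv (smult (b ^ k) (pcompose ((pderiv ^^ k) p) [:a, b:]))"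
    using Suc by simp
  also have "\<dots> = smult (b ^ Suc k) (pcompose ((pderiv ^^ Suc k) p) [:a, b:])"
    by (simp add: pderiv_smult pderiv_pcompose pderiv_pCons mult.commute)
  finally show ?case .
qed

lemma pderiv_funpow_degree: "degree ((pderiv ^^ k) (p::real poly)) = degree p - k"
  by (induction k) (auto simp: degree_pderiv)

lemma pderiv_funpow_vanish: "degree p < k \<Longrightarrow> (pderiv ^^ k) (p :: real poly) = 0"
proof (induction k arbitrary: p)
  case 0 then show ?case by simp
next
  case (Suc k)
  have "(pderiv ^^ Suc k) p = (pderiv ^^ k) (pderiv p)" by (simp add: funpow_Suc_right del: funpow.simps)
  also have "\<dots> = 0"
  proof (cases "degree p = 0")
    case True
    then have "pderiv p = 0" by (simp add: pderiv_eq_0_iff)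
    then show ?thesis by (simp add: pderiv_funpow_0)
  next
    case False
    then have "degree (pderiv p) < k" using Suc.prems by (simp add: degree_pderiv)
    then show ?thesis by (rule Suc.IH)
  qed
  finally show ?case .
qed

lemma Vp_alt: "Vp n = ([:0, 1:] * [:-1, 1:]) ^ n"
  unfolding Vp_def by simp

lemma degree_Vp: "degree (Vp n) = 2 * n"
  unfolding Vp_def by (subst degree_power_eq) auto

lemma degree_Wp: "degree (Wp n) = n"
  unfolding Wp_def by (simp add: pderiv_funpow_degree degree_Vp)

lemma Wp_nonzero: "n \<ge> 1 \<Longrightarrow> Wp n \<noteq> 0"
  using degree_Wp[of n] by auto

lemma pcompose_power_left: "pcompose (p ^ n) q = (pcompose p q) ^ (n::nat)"
  by (induction n) (simp_all add: pcompose_mult pcompose_1)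

lemma shifted_legendre_Wp: "shifted_legendre n = smult (2 ^ n) (Wp n)"
proof -
  have c: "pcompose [:-1, 0, 1:] [:-1, 2:] = smult 4 [:0, -1, 1::real:]"
    by (simp add: pcompose_pCons)
  have c2: "pcompose ([:-1, 0, 1:] ^ n) [:-1, 2:] = smult (4 ^ n) (Vp n)"
    unfolding Vp_def pcompose_power_left c smult_power ..
  have "(pderiv ^^ n) (pcompose ([:-1, 0, 1:] ^ n) [:-1, 2::real:]) =
        smult (2 ^ n) (shifted_legendre n)"
    unfolding shifted_legendre_def by (rule pderiv_funpow_lin)
  moreover have "(pderiv ^^ n) (pcompose ([:-1, 0, 1:] ^ n) [:-1, 2::real:]) = smult (4 ^ n) (Wp n)"
    unfolding c2 Wp_def by (rule pderiv_funpow_smult)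
  ultimately have "smult (2 ^ n) (shifted_legendre n) = smult (2 ^ n * 2 ^ n) (Wp n)"
    by (simp add: power_mult_distrib[symmetric])
  then have "smult (2 ^ n) (shifted_legendre n) = smult (2 ^ n) (smult (2 ^ n) (Wp n))"
    by simp
  then have "smult (inverse (2 ^ n)) (smult (2 ^ n) (shifted_legendre n)) =
     smult (inverse (2 ^ n)) (smult (2 ^ n) (smult (2 ^ n) (Wp n)))" by simp
  moreover have "inverse (2 ^ n) * (2 ^ n * 2 ^ n) = (2 ^ n :: real)" by simp
  ultimately show ?thesis by simp
qed

lemma pderiv_power_factor:
  fixes a b r :: "real poly"
  shows "pderiv (a ^ Suc k * b ^ Suc k * r) =
    a ^ k * b ^ k * (smult (of_nat (Suc k)) (pderiv a * b * r) + smult (of_nat (Suc k)) (a * pderiv b * r) + a * b * pderiv r)"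
  apply (simp only: pderiv_mult pderiv_power_Suc)
  apply (simp only: power_Suc)
  apply (simp add: algebra_simps)
  done

lemma Vp_deriv_factor:
  assumes "m \<le> n"
  shows "\<exists>r. (pderiv ^^ m) (Vp n) = [:0, 1:] ^ (n - m) * [:-1, 1:] ^ (n - m) * r"
  using assms
proof (induction m)
  case 0 show ?case unfolding Vp_alt power_mult_distrib by (intro exI[of _ 1]) simp
next
  case (Suc m)
  then obtain r where r: "(pderiv ^^ m) (Vp n) = [:0, 1:] ^ (n - m) * [:-1, 1:] ^ (n - m) * r" by auto
  obtain k where k: "n - m = Suc k" "n - Suc m = k" using Suc.prems by (metis Suc_diff_Suc diff_Suc_1 Suc_le_lessD)
  have "(pderiv ^^ Suc m) (Vp n) = pderiv ([:0, 1:] ^ Suc k * [:-1, 1:] ^ Suc k * r)"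
    by (simp only: funpow.simps o_apply r k(1))
  then show ?case unfolding pderiv_power_factor k(2) by blast
qed

lemma Vp_deriv_boundary:
  assumes "m < n"
  shows "poly ((pderiv ^^ m) (Vp n)) 0 = 0" "poly ((pderiv ^^ m) (Vp n)) 1 = 0"
proof -
  obtain r where r: "(pderiv ^^ m) (Vp n) = [:0, 1:] ^ (n - m) * [:-1, 1:] ^ (n - m) * r"
    using Vp_deriv_factor[of m n] assms by auto
  obtain k where k: "n - m = Suc k" using assms by (metis Suc_diff_Suc)
  show "poly ((pderiv ^^ m) (Vp n)) 0 = 0" "poly ((pderiv ^^ m) (Vp n)) 1 = 0"
    using r k by simp_all
qed

lemma Ip_parts: "Ip (pderiv a * b) = poly a 1 * poly b 1 - poly a 0 * poly b 0 - Ip (a * pderiv b)"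
proof -
  have "Ip (pderiv (a * b)) = poly a 1 * poly b 1 - poly a 0 * poly b 0" by (simp add: Ip_pderiv)
  moreover have "pderiv (a * b) = pderiv a * b + a * pderiv b" by (simp add: pderiv_mult algebra_simps)
  ultimately show ?thesis by (simp add: Ip_add)
qed

lemma Wp_orth_aux:
  assumes "j \<le> n"
  shows "Ip (Wp n * q) = (-1) ^ j * Ip ((pderiv ^^ (n - j)) (Vp n) * (pderiv ^^ j) q)"
  using assms
proof (induction j)
  case 0 then show ?case by (simp add: Wp_def)
next
  case (Suc j)
  define a where "a = (pderiv ^^ (n - Suc j)) (Vp n)"
  have na: "(pderiv ^^ (n - j)) (Vp n) = pderiv a"
    unfolding a_def using Suc.prems by (metis Suc_diff_Suc Suc_le_lessD funpow.simps(2) o_apply)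
  have b: "poly a 0 = 0" "poly a 1 = 0" unfolding a_def using Vp_deriv_boundary Suc.prems by auto
  have "Ip (Wp n * q) = (-1) ^ j * Ip (pderiv a * (pderiv ^^ j) q)"
    using Suc by (simp add: na)
  also have "\<dots> = (-1) ^ Suc j * Ip (a * (pderiv ^^ Suc j) q)"
    by (simp add: Ip_parts b)
  finally show ?case unfolding a_def .
qed

lemma Wp_orth:
  assumes "degree q < n"
  shows "Ip (Wp n * q) = 0"
  using Wp_orth_aux[of n n q] assms by (simp add: pderiv_funpow_vanish)

lemma rolle_many_aux:
  fixes p :: "real poly"
  assumes "finite S" "card S = Suc k" "\<forall>x\<in>S. poly p x = 0"
  shows "\<exists>T. finite T \<and> card T = k \<and> T \<subseteq> {Min S<..<Max S} \<and> (\<forall>x\<in>T. poly (pderiv p) x = 0)"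
  using assms
proof (induction k arbitrary: S)
  case 0 then show ?case by (intro exI[of _ "{}"]) auto
next
  case (Suc k)
  define M where "M = Max S"
  define S' where "S' = S - {M}"
  have ne: "S \<noteq> {}" using Suc.prems by auto
  have MS: "M \<in> S" unfolding M_def using Suc.prems ne by auto
  have fS': "finite S'" "card S' = Suc k" using Suc.prems MS unfolding S'_def by auto
  have neS': "S' \<noteq> {}" using fS' by auto
  obtain T' where T': "finite T'" "card T' = k" "T' \<subseteq> {Min S'<..<Max S'}" "\<forall>x\<in>T'. poly (pderiv p) x = 0"
    using Suc.IH[OF fS'] Suc.prems unfolding S'_def by auto
  have m'S': "Max S' \<in> S'" using fS' neS' by auto
  have lt: "Max S' < M"
  proof -
    have "Max S' \<in> S" "Max S' \<noteq> M" using m'S' unfolding S'_def by auto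
    moreover have "Max S' \<le> M" using \<open>Max S' \<in> S\<close> Suc.prems unfolding M_def by auto
    ultimately show ?thesis by auto
  qed
  have "poly p (Max S') = poly p M" using Suc.prems m'S' MS unfolding S'_def by auto
  moreover have "continuous_on {Max S'..M} (poly p)" by (auto intro!: continuous_intros)
  moreover have "\<And>x. poly p differentiable (at x)"
    by (rule differentiableI, rule has_field_derivative_imp_has_derivative, rule poly_DERIV)
  ultimately obtain z where z: "Max S' < z" "z < M" "DERIV (poly p) z :> 0"
    using Rolle[OF lt, of "poly p"] by blast
  have zr: "poly (pderiv p) z = 0" using DERIV_unique[OF z(3) poly_DERIV[of p z]] by simp
  have minle: "Min S \<le> Min S'"
    using fS' neS' Suc.prems by (simp add: S'_def Min_le)
  have "Min S' \<le> Max S'" using Min_le[OF fS'(1) m'S'] .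
  show ?case
  proof (intro exI[of _ "insert z T'"] conjI)
    show "finite (insert z T')" using T' by simp
    have "z \<notin> T'" using T'(3) z(1) by auto
    then show "card (insert z T') = Suc k" using T' by simp
    show "insert z T' \<subseteq> {Min S<..<Max S}"
      using T'(3) z minle lt \<open>Min S' \<le> Max S'\<close> unfolding M_def by auto
    show "\<forall>x\<in>insert z T'. poly (pderiv p) x = 0" using T'(4) zr by auto
  qed
qed

lemma Vp_roots_exist:
  assumes "m \<le> n"
  shows "\<exists>S. finite S \<and> card S = m \<and> S \<subseteq> {0<..<1} \<and> (\<forall>x\<in>S. poly ((pderiv ^^ m) (Vp n)) x = 0)"
  using assms
proof (induction m)
  case 0 then show ?case by (intro exI[of _ "{}"]) auto
next
  case (Suc m)
  then obtain S where S: "finite S" "card S = m" "S \<subseteq> {0<..<1}" "\<forall>x\<in>S. poly ((pderiv ^^ m) (Vp n)) x = 0"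
    by auto
  define S2 where "S2 = insert 0 (insert 1 S)"
  have f2: "finite S2" using S unfolding S2_def by simp
  have "0 \<notin> S" "1 \<notin> S" using S(3) by auto
  then have c2: "card S2 = Suc (Suc m)" unfolding S2_def using S by simp
  have mn: "m < n" using Suc.prems by simp
  have r2: "\<forall>x\<in>S2. poly ((pderiv ^^ m) (Vp n)) x = 0"
    unfolding S2_def using S(4) Vp_deriv_boundary[OF mn] by auto
  have "Min S2 = 0" unfolding S2_def using S(1,3) by (intro Min_eqI) auto
  moreover have "Max S2 = 1" unfolding S2_def using S(1,3) by (intro Max_eqI) auto
  ultimately obtain T where "finite T" "card T = Suc m" "T \<subseteq> {0<..<1}"
    "\<forall>x\<in>T. poly (pderiv ((pderiv ^^ m) (Vp n))) x = 0"
    using rolle_many_aux[OF f2 c2 r2] by auto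
  then show ?case by (intro exI[of _ T]) auto
qed

lemma Wp_roots:
  assumes "n \<ge> 1"
  shows "finite {x. poly (Wp n) x = 0} \<and> card {x. poly (Wp n) x = 0} = n \<and> {x. poly (Wp n) x = 0} \<subseteq> {0<..<1}"
proof -
  obtain S where S: "finite S" "card S = n" "S \<subseteq> {0<..<1}" "\<forall>x\<in>S. poly (Wp n) x = 0"
    using Vp_roots_exist[of n n] unfolding Wp_def by auto
  have fin: "finite {x. poly (Wp n) x = 0}" using Wp_nonzero[OF assms] by (rule poly_roots_finite)
  have le: "card {x. poly (Wp n) x = 0} \<le> n"
    using card_poly_roots_bound[OF Wp_nonzero[OF assms]] unfolding degree_Wp .
  have sub: "S \<subseteq> {x. poly (Wp n) x = 0}" using S(4) by blast
  have eq: "S = {x. poly (Wp n) x = 0}"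
    by (rule card_subset_eq[OF fin sub]) (use le S(2) card_mono[OF fin sub] in linarith)
  show ?thesis using S(1-3) unfolding eq[symmetric] by blast
qed

lemma Vp_reflect: "pcompose (Vp n) [:1, -1:] = Vp n"
proof -
  have "pcompose [:0, -1, 1:] [:1, -1:] = [:0, -1, 1::real:]" by (simp add: pcompose_pCons)
  then show ?thesis unfolding Vp_def pcompose_power_left by simp
qed

lemma Wp_reflect: "Wp n = smult ((-1) ^ n) (pcompose (Wp n) [:1, -1:])"
  using pderiv_funpow_lin[of n "Vp n" 1 "-1"] unfolding Vp_reflect Wp_def .

lemma Wp_reflect_poly: "poly (Wp n) (1 - x) = (-1) ^ n * poly (Wp n) x"
proof -
  have "poly (Wp n) x = (-1) ^ n * poly (Wp n) (1 - x)"
    by (subst Wp_reflect) (simp add: poly_pcompose)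
  then have "(-1) ^ n * poly (Wp n) x = ((-1) ^ n * (-1) ^ n) * poly (Wp n) (1 - x)" by simp
  also have "(-1) ^ n * (-1) ^ n = (1::real)" by (simp add: power_mult_distrib[symmetric])
  finally show ?thesis by simp
qed

lemma Wp_reflect_deriv: "(poly (pderiv (Wp n)) (1 - x))\<^sup>2 = (poly (pderiv (Wp n)) x)\<^sup>2"
proof -
  have eq: "pderiv (Wp n) = smult ((-1) ^ n) (pcompose (pderiv (Wp n)) [:1, -1:] * [:-1:])"
    by (subst Wp_reflect) (simp add: pderiv_smult pderiv_pcompose pderiv_pCons)
  have "poly (pderiv (Wp n)) x = (-1) ^ n * (poly (pderiv (Wp n)) (1 - x) * (-1))"
    using arg_cong[OF eq, of "\<lambda>p. poly p x"] by (simp add: poly_pcompose)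
  then have "(poly (pderiv (Wp n)) x)\<^sup>2 = ((-1) ^ n)\<^sup>2 * (poly (pderiv (Wp n)) (1 - x))\<^sup>2"
    by (simp add: power_mult_distrib)
  moreover have "((-1::real) ^ n)\<^sup>2 = 1" by (cases "even n") auto
  ultimately show ?thesis by simp
qed

lemma vanish_many:
  fixes p :: "real poly"
  assumes "finite A" "\<forall>x\<in>A. poly p x = 0" "degree p < card A"
  shows "p = 0"
proof (rule ccontr)
  assume nz: "p \<noteq> 0"
  have "card {x. poly p x = 0} \<le> degree p" by (rule card_poly_roots_bound[OF nz])
  moreover have "card A \<le> card {x. poly p x = 0}"
    by (rule card_mono[OF poly_roots_finite[OF nz]]) (use assms(2) in blast)
  ultimately show False using assms(3) by linarith
qed

definition omega :: "real set \<Rightarrow> real poly" where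
  "omega S = (\<Prod>p\<in>S. [:-p, 1:])"

lemma poly_omega: "poly (omega S) x = (\<Prod>p\<in>S. x - p)"
  unfolding omega_def poly_prod by simp

lemma poly_omega_zero_iff: "finite S \<Longrightarrow> poly (omega S) x = 0 \<longleftrightarrow> x \<in> S"
  unfolding poly_omega by simp

lemma omega_nz: "omega S \<noteq> 0"
proof
  assume "omega S = 0"
  then have "poly (omega S) (if finite S then Max S + 1 else 0) = 0" by simp
  then show False
    by (cases "finite S") (auto simp: poly_omega dest: Max_ge[of S] split: if_splits)
qed

lemma degree_omega: "finite S \<Longrightarrow> degree (omega S) = card S"
  unfolding omega_def by (subst degree_prod_eq_sum_degree) auto

lemma lead_coeff_omega: "lead_coeff (omega S) = 1"
  unfolding omega_def lead_coeff_prod by simp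

definition exact_on :: "nat \<Rightarrow> real set \<Rightarrow> (real \<Rightarrow> real) \<Rightarrow> bool" where
  "exact_on n S w \<longleftrightarrow> (\<forall>s. degree s \<le> 2 * n - 1 \<longrightarrow> (\<Sum>p\<in>S. w p * poly s p) = Ip s)"

lemma exact_lower_bound:
  assumes "finite S" "exact_on n S v" "card S < n"
  shows False
proof -
  define w where "w = omega S"
  have dw: "degree (w * w) = 2 * card S"
    unfolding w_def using assms(1) omega_nz by (simp add: degree_mult_eq degree_omega)
  then have "degree (w * w) \<le> 2 * n - 1" using assms(3) by simp
  then have "(\<Sum>p\<in>S. v p * poly (w * w) p) = Ip (w * w)" using assms(2) unfolding exact_on_def by blast
  moreover have "(\<Sum>p\<in>S. v p * poly (w * w) p) = 0"
    by (rule sum.neutral) (auto simp: w_def poly_omega_zero_iff[OF assms(1)])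
  moreover have "Ip (w * w) > 0" using Ip_pos omega_nz unfolding w_def by blast
  ultimately show False by simp
qed

locale qpoly =
  fixes L :: "real poly" and n :: nat
  assumes n1: "n \<ge> 1" and degL: "degree L = n" and Lnz: "L \<noteq> 0"
    and cardR: "card {x. poly L x = 0} = n"
    and Rsub: "{x. poly L x = 0} \<subseteq> {0<..<1}"
    and orth: "\<And>q. degree q < n \<Longrightarrow> Ip (L * q) = 0"
    and ends: "(poly L 0)\<^sup>2 = (poly L 1)\<^sup>2"
begin

abbreviation "R \<equiv> {x. poly L x = 0}"

lemma finR: "finite R" using Lnz by (rule poly_roots_finite)

definition ell :: "real \<Rightarrow> real poly" where "ell t = L div [:-t, 1:]"

lemma L_factor: "t \<in> R \<Longrightarrow> L = [:-t, 1:] * ell t"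
proof -
  assume "t \<in> R"
  then have "[:-t, 1:] dvd L" by (simp add: poly_eq_0_iff_dvd[symmetric])
  then show ?thesis unfolding ell_def by (rule dvd_mult_div_cancel[symmetric])
qed

lemma ell_nz: "t \<in> R \<Longrightarrow> ell t \<noteq> 0"
  using L_factor Lnz by fastforce

lemma degree_ell: "t \<in> R \<Longrightarrow> degree (ell t) = n - 1"
proof -
  assume t: "t \<in> R"
  have "degree L = degree [:-t, 1:] + degree (ell t)"
    by (subst L_factor[OF t]) (rule degree_mult_eq, simp, rule ell_nz[OF t])
  then show ?thesis using degL by simp
qed

lemma ell_vanish: "t \<in> R \<Longrightarrow> u \<in> R \<Longrightarrow> u \<noteq> t \<Longrightarrow> poly (ell t) u = 0"
proof -
  assume t: "t \<in> R" and u: "u \<in> R" "u \<noteq> t"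
  have "0 = poly L u" using u by simp
  also have "\<dots> = (u - t) * poly (ell t) u" by (subst L_factor[OF t]) (simp add: algebra_simps)
  finally show ?thesis using u by simp
qed

lemma ell_at: "t \<in> R \<Longrightarrow> poly (ell t) t = poly (pderiv L) t"
proof -
  assume t: "t \<in> R"
  have "pderiv L = [:-t, 1:] * pderiv (ell t) + ell t * pderiv [:-t, 1:]"
    by (subst L_factor[OF t]) (rule pderiv_mult)
  then show ?thesis by (simp add: pderiv_pCons)
qed

lemma deriv_nz: "t \<in> R \<Longrightarrow> poly (pderiv L) t \<noteq> 0"
proof
  assume t: "t \<in> R" and z: "poly (pderiv L) t = 0"
  have "\<forall>u\<in>R. poly (ell t) u = 0" using ell_vanish[OF t] ell_at[OF t] z by auto
  moreover have "degree (ell t) < card R" using degree_ell[OF t] cardR n1 by simp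
  ultimately have "ell t = 0" using vanish_many finR by blast
  then show False using ell_nz[OF t] by simp
qed

lemma interp:
  assumes "degree r < n"
  shows "r = (\<Sum>t\<in>R. smult (poly r t / poly (pderiv L) t) (ell t))"
proof -
  define D where "D = r - (\<Sum>t\<in>R. smult (poly r t / poly (pderiv L) t) (ell t))"
  have "degree (\<Sum>t\<in>R. smult (poly r t / poly (pderiv L) t) (ell t)) \<le> n - 1"
    by (rule degree_sum_le[OF finR]) (metis degree_ell degree_smult_le order.trans mem_Collect_eq)
  moreover have "degree D \<le> max (degree r) (degree (\<Sum>t\<in>R. smult (poly r t / poly (pderiv L) t) (ell t)))"
    unfolding D_def by (rule degree_diff_le_max)
  ultimately have dD: "degree D < n" using assms n1 by linarith
  have "\<forall>u\<in>R. poly D u = 0"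
  proof
    fix u assume u: "u \<in> R"
    have "(\<Sum>t\<in>R. poly r t / poly (pderiv L) t * poly (ell t) u) =
          poly r u / poly (pderiv L) u * poly (ell u) u"
      by (rule sum.remove[OF finR u, THEN trans]) (auto intro!: sum.neutral simp: ell_vanish[OF _ u])
    also have "\<dots> = poly r u" using ell_at[OF u] deriv_nz[OF u] by simp
    finally show "poly D u = 0" unfolding D_def by (simp add: poly_sum)
  qed
  then have "D = 0" using vanish_many[OF finR] dD cardR by simp
  then show ?thesis unfolding D_def by simp
qed

definition wq :: "real \<Rightarrow> real" where "wq t = Ip (ell t) / poly (pderiv L) t"

lemma deg_div:
  assumes "degree s \<le> 2 * n - 1"
  shows "degree (s div L) < n"
proof (cases "s div L = 0")
  case True then show ?thesis using n1 by simp
next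
  case False
  have "s div L * L = s - s mod L" by (metis add_diff_cancel_right' div_mult_mod_eq)
  moreover have "degree (s mod L) < n \<or> s mod L = 0" using degree_mod_less[OF Lnz, of s] degL by auto
  moreover have "degree (s - s mod L) \<le> max (degree s) (degree (s mod L))" by (rule degree_diff_le_max)
  ultimately have "degree (s div L * L) \<le> 2 * n - 1"
    using assms n1 by (auto simp: max_def split: if_splits)
  then show ?thesis using False Lnz degL n1 by (simp add: degree_mult_eq)
qed

lemma wq_exact: "exact_on n R wq"
  unfolding exact_on_def
proof (intro allI impI)
  fix s :: "real poly" assume ds: "degree s \<le> 2 * n - 1"
  define q where "q = s div L"
  define r where "r = s mod L"
  have s: "s = q * L + r" unfolding q_def r_def by simp
  have dq: "degree q < n" unfolding q_def by (rule deg_div[OF ds])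
  have dr: "degree r < n" unfolding r_def using degree_mod_less[OF Lnz, of s] degL n1 by auto
  have "Ip s = Ip r" unfolding s using orth[OF dq] by (simp add: Ip_add mult.commute)
  also have "\<dots> = Ip (\<Sum>t\<in>R. smult (poly r t / poly (pderiv L) t) (ell t))"
    using interp[OF dr] by simp
  also have "\<dots> = (\<Sum>t\<in>R. wq t * poly r t)"
    unfolding Ip_sum Ip_smult wq_def by (rule sum.cong) (simp_all add: mult.commute)
  also have "\<dots> = (\<Sum>t\<in>R. wq t * poly s t)"
    by (rule sum.cong) (auto simp: s)
  finally show "(\<Sum>t\<in>R. wq t * poly s t) = Ip s" by simp
qed

lemma weight_formula:
  assumes ex: "exact_on n R w" and t: "t \<in> R"
  shows "w t * (poly (pderiv L) t)\<^sup>2 = (poly L 0)\<^sup>2 / (t * (1 - t))"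
proof -
  define e where "e = ell t"
  define D where "D = pderiv L"
  define G where "G = [:-t, 1:] * e * e"
  have t01: "0 < t" "t < 1" using t Rsub by auto
  have LF: "L = [:-t, 1:] * e" unfolding e_def by (rule L_factor[OF t])
  have DF: "D = [:-t, 1:] * pderiv e + e"
    unfolding D_def LF pderiv_mult by (simp add: pderiv_pCons)
  have pG: "pderiv G = e * D + e * D - e * e"
    unfolding G_def DF pderiv_mult by (simp add: pderiv_pCons algebra_simps)
  have "degree G \<le> 1 + (n - 1) + (n - 1)"
  proof -
    have "degree G \<le> degree ([:-t, 1:] * e) + degree e" unfolding G_def by (rule degree_mult_le)
    moreover have "degree ([:-t, 1:] * e) \<le> degree [:-t, 1:] + degree e" by (rule degree_mult_le)
    moreover have "degree e = n - 1" unfolding e_def by (rule degree_ell[OF t])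
    ultimately show ?thesis by simp
  qed
  then have "degree (pderiv G) \<le> 2 * n - 1" using n1 by (simp add: degree_pderiv)
  then have "(\<Sum>u\<in>R. w u * poly (pderiv G) u) = Ip (pderiv G)" using ex unfolding exact_on_def by blast
  moreover have "(\<Sum>u\<in>R. w u * poly (pderiv G) u) = w t * poly (pderiv G) t"
    by (rule sum.remove[OF finR t, THEN trans])
       (auto intro!: sum.neutral simp: pG e_def ell_vanish[OF t])
  moreover have "poly (pderiv G) t = (poly D t)\<^sup>2"
    using ell_at[OF t] unfolding pG e_def[symmetric] D_def[symmetric] by (simp add: power2_eq_square)
  moreover have "Ip (pderiv G) = (1 - t) * (poly e 1)\<^sup>2 + t * (poly e 0)\<^sup>2"
    unfolding Ip_pderiv G_def by (simp add: power2_eq_square algebra_simps)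
  ultimately have W: "w t * (poly D t)\<^sup>2 = (1 - t) * (poly e 1)\<^sup>2 + t * (poly e 0)\<^sup>2"
    by simp
  have L1: "poly L 1 = (1 - t) * poly e 1" and L0: "poly L 0 = - t * poly e 0"
    by (subst LF, simp add: algebra_simps)+
  have "(poly L 1)\<^sup>2 / (1 - t) = (1 - t) * (poly e 1)\<^sup>2"
    unfolding L1 using t01 by (simp add: power2_eq_square field_simps)
  moreover have "(poly L 0)\<^sup>2 / t = t * (poly e 0)\<^sup>2"
    unfolding L0 using t01 by (simp add: power2_eq_square field_simps)
  ultimately have "w t * (poly D t)\<^sup>2 = (poly L 1)\<^sup>2 / (1 - t) + (poly L 0)\<^sup>2 / t"
    using W by simp
  also have "\<dots> = (poly L 0)\<^sup>2 / (t * (1 - t))"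
    using t01 ends by (simp add: field_simps)
  finally show ?thesis unfolding D_def .
qed

lemma L0_nz: "poly L 0 \<noteq> 0" using Rsub by auto

lemma nodes_unique:
  assumes "finite S" "card S = n" "exact_on n S v"
  shows "S = R"
proof -
  define w where "w = omega S"
  define c where "c = lead_coeff L"
  define r where "r = smult c w - L"
  have dw: "degree w = n" unfolding w_def using degree_omega assms by simp
  have worth: "Ip (w * q) = 0" if "degree q < n" for q
  proof -
    have "degree (w * q) \<le> 2 * n - 1" using degree_mult_le[of w q] dw that by linarith
    then have "Ip (w * q) = (\<Sum>p\<in>S. v p * poly (w * q) p)" using assms(3) unfolding exact_on_def by metis
    also have "\<dots> = 0" by (rule sum.neutral) (auto simp: w_def poly_omega_zero_iff[OF assms(1)])
    finally show ?thesis .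
  qed
  have dr: "degree r < n"
  proof -
    have "degree r \<le> max (degree (smult c w)) (degree L)" unfolding r_def by (rule degree_diff_le_max)
    moreover have "degree (smult c w) \<le> n" using degree_smult_le[of c w] dw by simp
    ultimately have le: "degree r \<le> n" using degL by simp
    have "coeff r n = 0" unfolding r_def c_def using dw degL lead_coeff_omega[of S]
      by (simp add: w_def)
    then have "degree r \<noteq> n \<or> r = 0" by auto
    then show ?thesis using le n1 by (cases "r = 0") auto
  qed
  have "r * r = (smult c w - L) * r" by (simp add: r_def[symmetric])
  also have "\<dots> = smult c (w * r) - L * r" by (simp add: algebra_simps)
  finally have "Ip (r * r) = c * Ip (w * r) - Ip (L * r)" by (simp add: Ip_diff Ip_smult)
  also have "\<dots> = 0" using worth[OF dr] orth[OF dr] by simp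
  finally have "r = 0" using Ip_pos by fastforce
  then have Lw: "L = smult c w" unfolding r_def by simp
  have "c \<noteq> 0" unfolding c_def using Lnz by simp
  then show ?thesis unfolding Lw using poly_omega_zero_iff[OF assms(1)] by (auto simp: w_def)
qed

end

lemma sqrt_mul_aux:
  fixes p q :: real
  assumes "0 < p" "0 \<le> q"
  shows "p * sqrt (q / p) = sqrt (p * q)"
proof -
  have "p * q = p\<^sup>2 * (q / p)" using assms by (simp add: power2_eq_square field_simps)
  then have "sqrt (p * q) = sqrt (p\<^sup>2) * sqrt (q / p)" using real_sqrt_mult[of "p\<^sup>2" "q / p"] by simp
  also have "sqrt (p\<^sup>2) = p" using assms by simp
  finally show ?thesis by simp
qed

definition Bp :: "nat \<Rightarrow> nat \<Rightarrow> real poly" where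
  "Bp l x = [:0, 1:] ^ x * [:1, -1:] ^ (l - x)"

lemma poly_Bp_deriv:
  assumes "x = Suc a" "l - x = Suc b"
  shows "poly (pderiv (Bp l x)) p = p ^ a * (1 - p) ^ b * (real (Suc a) * (1 - p) - real (Suc b) * p)"
proof -
  have b: "l - Suc a = Suc b" using assms by simp
  show ?thesis
    unfolding Bp_def assms(1) b pderiv_mult pderiv_power_Suc by (simp add: pderiv_pCons algebra_simps)
qed

lemma f_bias_deriv:
  assumes p: "0 < p" "p < 1" and x: "1 \<le> x" "x < l"
  shows "f_bias l x p = sqrt (p * (1 - p)) * poly (pderiv (Bp l x)) p"
proof -
  obtain a where a: "x = Suc a" using x by (cases x) auto
  obtain b where b: "l - x = Suc b" using x by (metis Suc_diff_Suc Suc_le_lessD diff_Suc_Suc le_add_diff_inverse2 less_imp_le_nat) 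
  have s1: "p * sigma_b p = sqrt (p * (1 - p))"
    unfolding sigma_b_def using p by (simp add: sqrt_mul_aux)
  have s2: "(1 - p) * sigma_b (1 - p) = sqrt (p * (1 - p))"
    unfolding sigma_b_def using p by (subst sqrt_mul_aux) (simp_all add: mult.commute)
  have "f_bias l x p = p ^ a * (1 - p) ^ b *
      (real (Suc a) * (1 - p) * (p * sigma_b p) - real (Suc b) * p * ((1 - p) * sigma_b (1 - p)))"
    unfolding f_bias_def a b[unfolded a] by (simp add: algebra_simps)
  also have "\<dots> = sqrt (p * (1 - p)) * (p ^ a * (1 - p) ^ b * (real (Suc a) * (1 - p) - real (Suc b) * p))"
    unfolding s1 s2 by (simp add: algebra_simps)
  also have "poly (pderiv (Bp l x)) p = p ^ a * (1 - p) ^ b * (real (Suc a) * (1 - p) - real (Suc b) * p)"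
    by (rule poly_Bp_deriv[OF a b])
  ultimately show ?thesis by simp
qed

lemma Bp_ends:
  assumes "1 \<le> x" "x < l"
  shows "poly (Bp l x) 0 = 0" "poly (Bp l x) 1 = 0"
  using assms unfolding Bp_def by (auto simp: zero_power)

lemma degree_Bp_deriv:
  assumes "l \<le> m" "x \<le> l"
  shows "degree (pderiv (Bp l x)) \<le> m - 1"
proof -
  have "degree (Bp l x) \<le> degree ([:0, 1::real:] ^ x) + degree ([:1, -1::real:] ^ (l - x))"
    unfolding Bp_def by (rule degree_mult_le)
  also have "\<dots> \<le> x + (l - x)"
    using degree_power_le[of "[:0, 1::real:]" x] degree_power_le[of "[:1, -1::real:]" "l - x"] by simp
  finally have "degree (Bp l x) \<le> x + (l - x)" .
  then have "degree (Bp l x) \<le> m" using assms by linarith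
  then show ?thesis by (simp add: degree_pderiv)
qed

lemma f_bias_reflect:
  assumes "x \<le> l"
  shows "f_bias l x (1 - p) = - f_bias l (l - x) p"
  unfolding f_bias_def using assms by (simp add: algebra_simps of_nat_diff)

lemma f_bias_moment:
  assumes p: "0 < p" "p < 1"
  shows "f_bias (j + 2) (j + 1) p = sqrt (p * (1 - p)) * (real (j + 1) * p ^ j - real (j + 2) * p ^ (j + 1))"
proof -
  have "f_bias (j + 2) (j + 1) p = sqrt (p * (1 - p)) * poly (pderiv (Bp (j + 2) (j + 1))) p"
    by (rule f_bias_deriv[OF p]) auto
  also have "poly (pderiv (Bp (j + 2) (j + 1))) p = real (j + 1) * p ^ j - real (j + 2) * p ^ (j + 1)"
    by (subst poly_Bp_deriv[of _ j _ 0]) (auto simp: algebra_simps)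
  finally show ?thesis .
qed

lemma shifted_legendre_qpoly:
  assumes "n \<ge> 1"
  shows "qpoly (shifted_legendre n) n"
proof -
  have L: "shifted_legendre n = smult (2 ^ n) (Wp n)" by (rule shifted_legendre_Wp)
  have roots: "{x. poly (shifted_legendre n) x = 0} = {x. poly (Wp n) x = 0}" unfolding L by simp
  show ?thesis
  proof
    show "1 \<le> n" by fact
    show "degree (shifted_legendre n) = n" unfolding L by (simp add: degree_Wp)
    show "shifted_legendre n \<noteq> 0" unfolding L using Wp_nonzero[OF assms] by simp
    show "card {x. poly (shifted_legendre n) x = 0} = n" unfolding roots using Wp_roots[OF assms] by simp
    show "{x. poly (shifted_legendre n) x = 0} \<subseteq> {0<..<1}" unfolding roots using Wp_roots[OF assms] by simp
    show "Ip (shifted_legendre n * q) = 0" if "degree q < n" for q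
      unfolding L using Wp_orth[OF that] by (simp add: Ip_smult)
    have "poly (Wp n) 1 = (-1) ^ n * poly (Wp n) 0" using Wp_reflect_poly[of n 0] by simp
    then have "(poly (Wp n) 1)\<^sup>2 = ((-1) ^ n)\<^sup>2 * (poly (Wp n) 0)\<^sup>2" by (simp add: power_mult_distrib)
    moreover have "((-1::real) ^ n)\<^sup>2 = 1" by (cases "even n") auto
    ultimately show "(poly (shifted_legendre n) 0)\<^sup>2 = (poly (shifted_legendre n) 1)\<^sup>2"
      unfolding L by (simp add: power_mult_distrib)
  qed
qed

lemma shifted_legendre_reflect_root:
  "poly (shifted_legendre n) (1 - x) = 0 \<longleftrightarrow> poly (shifted_legendre n) x = 0"
  unfolding shifted_legendre_Wp by (simp add: Wp_reflect_poly)

lemma shifted_legendre_reflect_deriv: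
  "(poly (pderiv (shifted_legendre n)) (1 - x))\<^sup>2 = (poly (pderiv (shifted_legendre n)) x)\<^sup>2"
  unfolding shifted_legendre_Wp pderiv_smult using Wp_reflect_deriv[of n x]
  by (simp add: power_mult_distrib)

lemma fb_expect:
  assumes "finite_bias_distribution P"
  shows "measure_pmf.expectation P f = (\<Sum>a\<in>set_pmf P. f a * pmf P a)"
  by (rule integral_measure_pmf_real) (use assms in \<open>auto simp: finite_bias_distribution_def\<close>)

lemma fb_sym_set:
  assumes "finite_bias_distribution P"
  shows "1 - a \<in> set_pmf P \<longleftrightarrow> a \<in> set_pmf P"
  using assms unfolding finite_bias_distribution_def set_pmf_iff by metis

lemma fb_reflect_sum:
  assumes "finite_bias_distribution P"
  shows "(\<Sum>a\<in>set_pmf P. g a) = (\<Sum>a\<in>set_pmf P. g (1 - a))"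
  by (rule sum.reindex_bij_witness[of _ "\<lambda>a. 1 - a" "\<lambda>a. 1 - a"]) (auto simp: fb_sym_set[OF assms])

lemma indist_zero:
  assumes fb: "finite_bias_distribution P" and ind: "indistinguishable c P"
    and l: "2 \<le> l" "l \<le> c" and x: "1 \<le> x" "x \<le> l - 1"
  shows "measure_pmf.expectation P (f_bias l x) = 0"
proof -
  have le: "measure_pmf.expectation P (f_bias l y) \<le> 0" if y: "1 \<le> y" "y \<le> l - 1" for y
  proof -
    have s: "(\<Sum>x = 1..l - 1. real (l choose x) * R_bias P l x) = 0"
      using ind l unfolding indistinguishable_def by blast
    have nn: "\<And>x. x \<in> {1..l - 1} \<Longrightarrow> 0 \<le> real (l choose x) * R_bias P l x"
      unfolding R_bias_def by simp
    have all: "\<forall>x\<in>{1..l - 1}. real (l choose x) * R_bias P l x = 0"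
    proof -
      have "(\<Sum>x = 1..l - 1. real (l choose x) * R_bias P l x) = 0 \<longleftrightarrow>
            (\<forall>x\<in>{1..l - 1}. real (l choose x) * R_bias P l x = 0)"
        by (rule sum_nonneg_eq_0_iff) (simp, rule nn)
      then show ?thesis using s by blast
    qed
    have yin: "y \<in> {1..l - 1}" using y by simp
    have "real (l choose y) * R_bias P l y = 0" by (rule bspec[OF all yin])
    moreover have "real (l choose y) > 0" using y by simp
    ultimately have "R_bias P l y = 0" by simp
    then show ?thesis unfolding R_bias_def by (simp add: max_def split: if_splits)
  qed
  have "measure_pmf.expectation P (f_bias l x) = (\<Sum>a\<in>set_pmf P. f_bias l x a * pmf P a)"
    by (rule fb_expect[OF fb])
  also have "\<dots> = (\<Sum>a\<in>set_pmf P. f_bias l x (1 - a) * pmf P (1 - a))"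
    by (rule fb_reflect_sum[OF fb])
  also have "\<dots> = - (\<Sum>a\<in>set_pmf P. f_bias l (l - x) a * pmf P a)"
    using fb x unfolding finite_bias_distribution_def
    by (auto simp: f_bias_reflect sum_negf[symmetric] intro!: sum.cong)
  also have "\<dots> = - measure_pmf.expectation P (f_bias l (l - x))"
    by (simp add: fb_expect[OF fb])
  finally have eq: "measure_pmf.expectation P (f_bias l x) = - measure_pmf.expectation P (f_bias l (l - x))" .
  have "measure_pmf.expectation P (f_bias l (l - x)) \<le> 0" using le x l by simp
  then show ?thesis using le[OF x] eq by linarith
qed

context
  fixes P :: "real pmf" and n :: nat
  assumes fb: "finite_bias_distribution P" and ind: "indistinguishable (2 * n) P" and n1: "n \<ge> 1"
begin

definition mu :: "real \<Rightarrow> real" where "mu a = pmf P a * sqrt (a * (1 - a))"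
definition Kc :: real where "Kc = (\<Sum>a\<in>set_pmf P. mu a)"

lemma finS: "finite (set_pmf P)" using fb unfolding finite_bias_distribution_def by simp
lemma S01: "a \<in> set_pmf P \<Longrightarrow> 0 < a \<and> a < 1" using fb unfolding finite_bias_distribution_def by auto

lemma mu_pos: "a \<in> set_pmf P \<Longrightarrow> mu a > 0"
  unfolding mu_def using S01[of a] pmf_positive[of a P] by simp

lemma Kc_pos: "Kc > 0"
  unfolding Kc_def by (rule sum_pos[OF finS set_pmf_not_empty mu_pos])

lemma moment_rec:
  assumes "j + 2 \<le> 2 * n"
  shows "real (j + 1) * (\<Sum>a\<in>set_pmf P. mu a * a ^ j) = real (j + 2) * (\<Sum>a\<in>set_pmf P. mu a * a ^ (j + 1))"
proof -
  have "0 = measure_pmf.expectation P (f_bias (j + 2) (j + 1))"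
    by (rule indist_zero[OF fb ind, symmetric]) (use assms in auto)
  also have "\<dots> = (\<Sum>a\<in>set_pmf P. f_bias (j + 2) (j + 1) a * pmf P a)" by (rule fb_expect[OF fb])
  also have "\<dots> = (\<Sum>a\<in>set_pmf P. mu a * (real (j + 1) * a ^ j - real (j + 2) * a ^ (j + 1)))"
    by (intro sum.cong refl) (subgoal_tac "0 < x \<and> x < 1", use f_bias_moment in \<open>force simp: mu_def\<close>, rule S01)
  also have "\<dots> = real (j + 1) * (\<Sum>a\<in>set_pmf P. mu a * a ^ j) - real (j + 2) * (\<Sum>a\<in>set_pmf P. mu a * a ^ (j + 1))"
    by (simp add: sum_distrib_left sum_subtractf algebra_simps)
  finally show ?thesis by simp
qed

lemma moments:
  assumes "k \<le> 2 * n - 1"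
  shows "(\<Sum>a\<in>set_pmf P. mu a * a ^ k) = Kc / (real k + 1)"
  using assms
proof (induction k)
  case 0 then show ?case by (simp add: Kc_def)
next
  case (Suc k)
  have "real (k + 1) * (\<Sum>a\<in>set_pmf P. mu a * a ^ k) = real (k + 2) * (\<Sum>a\<in>set_pmf P. mu a * a ^ (k + 1))"
    by (rule moment_rec) (use Suc.prems in auto)
  then have "real (k + 1) * (Kc / (real k + 1)) = real (k + 2) * (\<Sum>a\<in>set_pmf P. mu a * a ^ Suc k)"
    using Suc by simp
  moreover have "real (k + 1) * (Kc / (real k + 1)) = Kc" by (simp add: add.commute)
  ultimately have "Kc = real (k + 2) * (\<Sum>a\<in>set_pmf P. mu a * a ^ Suc k)" by simp
  then show ?case by (simp add: field_simps)
qed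

lemma exact_mu: "exact_on n (set_pmf P) (\<lambda>a. mu a / Kc)"
  unfolding exact_on_def
proof (intro allI impI)
  fix s :: "real poly" assume ds: "degree s \<le> 2 * n - 1"
  have "(\<Sum>a\<in>set_pmf P. mu a / Kc * poly s a) = (\<Sum>a\<in>set_pmf P. \<Sum>i\<le>degree s. coeff s i * (mu a * a ^ i) / Kc)"
    by (simp add: poly_altdef sum_distrib_left sum_divide_distrib algebra_simps)
  also have "\<dots> = (\<Sum>i\<le>degree s. coeff s i * (\<Sum>a\<in>set_pmf P. mu a * a ^ i) / Kc)"
    by (subst sum.swap) (simp add: sum_distrib_left sum_divide_distrib)
  also have "\<dots> = (\<Sum>i\<le>degree s. coeff s i / (real i + 1))"
    using Kc_pos ds by (intro sum.cong refl) (simp add: moments)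
  also have "\<dots> = Ip s" by (simp add: Ip_coeffs)
  finally show "(\<Sum>a\<in>set_pmf P. mu a / Kc * poly s a) = Ip s" .
qed

lemma card_lower: "card (set_pmf P) \<ge> n"
  using exact_lower_bound[OF finS exact_mu] by fastforce

end

lemma powr_three_halves: "0 < (x::real) \<Longrightarrow> x powr (3/2) = x * sqrt x"
proof -
  assume x: "0 < x"
  have "x powr (3/2) = x powr (1 + 1/2)" by simp
  also have "\<dots> = x powr 1 * x powr (1/2)" by (rule powr_add)
  also have "\<dots> = x * sqrt x" using x by (simp add: powr_half_sqrt)
  finally show ?thesis .
qed

context
  fixes n :: nat
  assumes n1: "n \<ge> 1"
begin

abbreviation "LL \<equiv> shifted_legendre n"
abbreviation "RR \<equiv> {x. poly LL x = 0}"

interpretation Q: qpoly LL n by (rule shifted_legendre_qpoly[OF n1])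

definition hh :: "real \<Rightarrow> real" where
  "hh a = 1 / ((a * (1 - a)) powr (3/2) * (poly (pderiv LL) a)\<^sup>2)"

lemma RR01: "a \<in> RR \<Longrightarrow> 0 < a \<and> a < 1" using Q.Rsub by auto

lemma hh_pos: "a \<in> RR \<Longrightarrow> hh a > 0"
  unfolding hh_def using RR01[of a] Q.deriv_nz[of a] by simp

lemma hh_alt:
  assumes a: "a \<in> RR"
  shows "hh a = Q.wq a / ((poly LL 0)\<^sup>2 * sqrt (a * (1 - a)))"
proof -
  define u where "u = a * (1 - a)"
  define d where "d = (poly (pderiv LL) a)\<^sup>2"
  define A where "A = (poly LL 0)\<^sup>2"
  have a01: "0 < u" using RR01[OF a] unfolding u_def by simp
  have w: "Q.wq a * d = A / u"
    unfolding u_def d_def A_def by (rule Q.weight_formula[OF Q.wq_exact a])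
  have dp: "d > 0" using Q.deriv_nz[OF a] unfolding d_def by simp
  have Ap: "A > 0" using Q.L0_nz unfolding A_def by simp
  have sp: "sqrt u > 0" using a01 by simp
  have wq: "Q.wq a = A / (u * d)"
    using w dp a01 by (simp add: field_simps)
  have "hh a = 1 / (u * sqrt u * d)" unfolding hh_def u_def[symmetric] d_def[symmetric]
    using a01 by (simp add: powr_three_halves)
  also have "\<dots> = Q.wq a / (A * sqrt u)" unfolding wq using a01 dp Ap sp by (simp add: field_simps)
  finally show ?thesis unfolding u_def A_def .
qed

definition ZZ :: real where "ZZ = (\<Sum>a\<in>RR. hh a)"

lemma RR_ne: "RR \<noteq> {}"
proof
  assume "RR = {}"
  then have "card RR = 0" by (simp only: card.empty)
  then show False using Q.cardR n1 by simp
qed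

lemma ZZ_pos: "ZZ > 0"
  unfolding ZZ_def by (rule sum_pos[OF Q.finR RR_ne hh_pos])

definition gg :: "real \<Rightarrow> real" where
  "gg a = (if a \<in> RR then hh a / ZZ else 0)"

lemma gg_nonneg: "0 \<le> gg a"
  unfolding gg_def using hh_pos ZZ_pos by (auto intro: less_imp_le)

lemma gg_int: "(\<integral>\<^sup>+ x. ennreal (gg x) \<partial>count_space UNIV) = 1"
proof -
  have "(\<integral>\<^sup>+ x. ennreal (gg x) \<partial>count_space UNIV) = (\<Sum>x\<in>RR. ennreal (gg x))"
    by (rule nn_integral_count_space'[OF Q.finR]) (auto simp: gg_def)
  also have "\<dots> = ennreal (\<Sum>x\<in>RR. gg x)" by (rule sum_ennreal) (rule gg_nonneg)
  also have "(\<Sum>x\<in>RR. gg x) = (\<Sum>x\<in>RR. hh x) / ZZ" by (simp add: gg_def sum_divide_distrib)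
  also have "\<dots> = 1" using ZZ_pos unfolding ZZ_def by simp
  finally show ?thesis by simp
qed

definition PP :: "real pmf" where "PP = embed_pmf gg"

lemma pmf_PP: "pmf PP a = gg a"
  unfolding PP_def by (rule pmf_embed_pmf[OF gg_nonneg gg_int])

lemma set_PP: "set_pmf PP = RR"
  unfolding PP_def set_embed_pmf[OF gg_nonneg gg_int]
proof (intro set_eqI iffI)
  fix x assume "x \<in> {x. gg x \<noteq> 0}" then show "x \<in> RR" by (auto simp: gg_def split: if_splits)
next
  fix x assume x: "x \<in> RR"
  then have "gg x = hh x / ZZ" by (simp add: gg_def)
  moreover have "hh x / ZZ > 0" using hh_pos[OF x] ZZ_pos by simp
  ultimately have "gg x \<noteq> 0" by linarith
  then show "x \<in> {x. gg x \<noteq> 0}" by simp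
qed

lemma PP_fb: "finite_bias_distribution PP"
  unfolding finite_bias_distribution_def
proof (intro conjI allI)
  show "finite (set_pmf PP)" unfolding set_PP by (rule Q.finR)
  show "set_pmf PP \<subseteq> {0<..<1}" unfolding set_PP by (rule Q.Rsub)
  fix a
  have r: "1 - a \<in> RR \<longleftrightarrow> a \<in> RR" using shifted_legendre_reflect_root[of n a] by simp
  have "hh (1 - a) = hh a" unfolding hh_def using shifted_legendre_reflect_deriv[of n a]
    by (simp add: mult.commute)
  then show "pmf PP a = pmf PP (1 - a)" unfolding pmf_PP gg_def using r by simp
qed

lemma PP_expect:
  assumes l: "2 \<le> l" "l \<le> 2 * n" and x: "1 \<le> x" "x \<le> l - 1"
  shows "measure_pmf.expectation PP (f_bias l x) = 0"
proof -
  have "measure_pmf.expectation PP (f_bias l x) = (\<Sum>a\<in>RR. f_bias l x a * gg a)"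
    using fb_expect[OF PP_fb] unfolding set_PP pmf_PP .
  also have "\<dots> = (\<Sum>a\<in>RR. (1 / ((poly LL 0)\<^sup>2 * ZZ)) * (Q.wq a * poly (pderiv (Bp l x)) a))"
  proof (intro sum.cong refl)
    fix a assume a: "a \<in> RR"
    have a01: "0 < a" "a < 1" using RR01[OF a] by auto
    define s where "s = sqrt (a * (1 - a))"
    define A where "A = (poly LL 0)\<^sup>2"
    have sq: "s > 0" using a01 unfolding s_def by simp
    have Ap: "A > 0" using Q.L0_nz unfolding A_def by simp
    have f: "f_bias l x a = s * poly (pderiv (Bp l x)) a"
      unfolding s_def by (rule f_bias_deriv[OF a01]) (use x l in auto)
    have g: "gg a = Q.wq a / (A * s) / ZZ"
      unfolding gg_def using a hh_alt[OF a] by (simp add: s_def A_def)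
    show "f_bias l x a * gg a = (1 / ((poly LL 0)\<^sup>2 * ZZ)) * (Q.wq a * poly (pderiv (Bp l x)) a)"
      unfolding f g A_def[symmetric] using sq Ap ZZ_pos by (simp add: field_simps)
  qed
  also have "\<dots> = (1 / ((poly LL 0)\<^sup>2 * ZZ)) * (\<Sum>a\<in>RR. Q.wq a * poly (pderiv (Bp l x)) a)"
    by (simp add: sum_distrib_left)
  also have "(\<Sum>a\<in>RR. Q.wq a * poly (pderiv (Bp l x)) a) = Ip (pderiv (Bp l x))"
    using Q.wq_exact degree_Bp_deriv[of l "2 * n" x] l x unfolding exact_on_def by auto
  also have "\<dots> = 0" using Bp_ends[of x l] x l by (simp add: Ip_pderiv)
  finally show ?thesis by simp
qed

lemma PP_indist: "indistinguishable (2 * n) PP"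
  unfolding indistinguishable_def
proof (intro allI impI)
  fix l assume l: "2 \<le> l \<and> l \<le> 2 * n"
  have "\<And>x. x \<in> {1..l - 1} \<Longrightarrow> R_bias PP l x = 0"
    unfolding R_bias_def using PP_expect l by auto
  then show "(\<Sum>x = 1..l - 1. real (l choose x) * R_bias PP l x) = 0" by simp
qed

lemma PP_card: "card (set_pmf PP) = n" unfolding set_PP by (rule Q.cardR)

lemma PP_minimal: "minimal_indist (2 * n) PP"
  unfolding minimal_indist_def using PP_fb PP_indist PP_card card_lower[OF _ _ n1] by auto

lemma minimal_char:
  assumes m: "minimal_indist (2 * n) P"
  shows "set_pmf P = RR \<and>
       (\<exists>C>0. \<forall>p\<in>set_pmf P.
          pmf P p = C / ((p * (1 - p)) powr (3/2) * (poly (pderiv LL) p)\<^sup>2)) \<and>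
       card (set_pmf P) = n"
proof -
  have fb: "finite_bias_distribution P" and ind: "indistinguishable (2 * n) P"
    using m unfolding minimal_indist_def by auto
  have "card (set_pmf P) \<le> card (set_pmf PP)" using m PP_fb PP_indist unfolding minimal_indist_def by blast
  then have c: "card (set_pmf P) = n" using card_lower[OF fb ind n1] PP_card by simp
  have ex: "exact_on n (set_pmf P) (\<lambda>a. mu P a / Kc P)" by (rule exact_mu[OF fb ind n1])
  have S: "set_pmf P = RR" by (rule Q.nodes_unique[OF finS[OF fb ind n1] c ex])
  have K: "Kc P > 0" by (rule Kc_pos[OF fb ind n1])
  have A: "(poly LL 0)\<^sup>2 > 0" using Q.L0_nz by simp
  have "\<forall>p\<in>set_pmf P. pmf P p = (Kc P * (poly LL 0)\<^sup>2) / ((p * (1 - p)) powr (3/2) * (poly (pderiv LL) p)\<^sup>2)"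
  proof
    fix p assume p: "p \<in> set_pmf P"
    then have pR: "p \<in> RR" using S by simp
    define u where "u = p * (1 - p)"
    define d where "d = (poly (pderiv LL) p)\<^sup>2"
    define A where "A = (poly LL 0)\<^sup>2"
    have a01: "0 < u" using RR01[OF pR] unfolding u_def by simp
    have sp: "sqrt u > 0" using a01 by simp
    have dp: "d > 0" using Q.deriv_nz[OF pR] unfolding d_def by simp
    have "mu P p / Kc P * d = A / u"
      unfolding u_def d_def A_def by (rule Q.weight_formula[OF ex[unfolded S] pR])
    then have "pmf P p * sqrt u / Kc P * d = A / u"
      unfolding mu_def[OF fb ind n1] u_def .
    then have "pmf P p = (Kc P * A) / (u * sqrt u * d)"
      using K a01 sp dp by (simp add: field_simps)
    then show "pmf P p = (Kc P * (poly LL 0)\<^sup>2) / ((p * (1 - p)) powr (3/2) * (poly (pderiv LL) p)\<^sup>2)"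
      unfolding u_def[symmetric] d_def[symmetric] A_def[symmetric] using a01 by (simp add: powr_three_halves)
  qed
  moreover have "Kc P * (poly LL 0)\<^sup>2 > 0" using K A by simp
  ultimately show ?thesis using S c by blast
qed

lemma minimal_unique:
  assumes "minimal_indist (2 * n) P1" "minimal_indist (2 * n) P2"
  shows "P1 = P2"
proof -
  define den where "den p = (p * (1 - p)) powr (3/2) * (poly (pderiv LL) p)\<^sup>2" for p
  obtain C1 where C1: "C1 > 0" "\<forall>p\<in>set_pmf P1. pmf P1 p = C1 / den p" and S1: "set_pmf P1 = RR"
    using minimal_char[OF assms(1)] unfolding den_def by blast
  obtain C2 where C2: "C2 > 0" "\<forall>p\<in>set_pmf P2. pmf P2 p = C2 / den p" and S2: "set_pmf P2 = RR"
    using minimal_char[OF assms(2)] unfolding den_def by blast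
  have "1 = (\<Sum>p\<in>RR. pmf P1 p)" using sum_pmf_eq_1[OF Q.finR] S1 by simp
  also have "\<dots> = C1 * (\<Sum>p\<in>RR. 1 / den p)" using C1 S1 by (simp add: sum_distrib_left)
  finally have e1: "C1 * (\<Sum>p\<in>RR. 1 / den p) = 1" by simp
  have "1 = (\<Sum>p\<in>RR. pmf P2 p)" using sum_pmf_eq_1[OF Q.finR] S2 by simp
  also have "\<dots> = C2 * (\<Sum>p\<in>RR. 1 / den p)" using C2 S2 by (simp add: sum_distrib_left)
  finally have e2: "C2 * (\<Sum>p\<in>RR. 1 / den p) = 1" by simp
  have "C1 = C2" using e1 e2 by (metis mult_cancel_right mult_zero_left zero_neq_one)
  show ?thesis
  proof (rule pmf_eqI)
    fix i
    show "pmf P1 i = pmf P2 i"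
    proof (cases "i \<in> RR")
      case True then show ?thesis using C1 C2 S1 S2 \<open>C1 = C2\<close> by simp
    next
      case False
      then have "pmf P1 i = 0" "pmf P2 i = 0" using S1 S2 by (auto simp: set_pmf_iff)
      then show ?thesis by simp
    qed
  qed
qed

end

theorem theorem3:
  fixes \<nu> :: nat
  assumes "\<nu> \<ge> 1"
  shows "(\<exists>!P. minimal_indist (2 * \<nu>) P) \<and>
    (\<forall>P. minimal_indist (2 * \<nu>) P \<longrightarrow>
       set_pmf P = {p. poly (shifted_legendre \<nu>) p = 0} \<and>
       (\<exists>C>0. \<forall>p\<in>set_pmf P.
          pmf P p = C / ((p * (1 - p)) powr (3/2) *
                         (poly (pderiv (shifted_legendre \<nu>)) p)\<^sup>2)) \<and>
       card (set_pmf P) = \<nu>)"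
  using PP_minimal[OF assms] minimal_unique[OF assms] minimal_char[OF assms] by blast


end
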